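(* Consider the algorithm described in the context, suppose it does not terminate finitely, and suppose there is $\sigma_{\min}>0$ with $\sigma_{\min}(J_k)\ge\sigma_{\min}$ for all $k\in\mathbb{N}$. If $\alpha_k\le\tau_{\min}/(\tau_{\min}L_g+L_J)$, then $k\in\mathcal S$. Therefore $$\alpha_k\ge\alpha_{\min}:=\min\{\alpha_0,\ \xi\tau_{\min}/(\tau_{\min}L_g+L_J)\}>0\quad\text{for all }k\in\mathbb{N},$$ and the number of unsuccessful iterations satisfies $$|\{k\in\mathbb{N}: k\notin\mathcal S\}|\le\max\Big(0,\Big\lceil\frac{\log\big(\tau_{\min}/(\alpha_0(\tau_{\min}L_g+L_J))\big)}{\log\xi}\Big\rceil\Big).$$
   Context: Problem: $\min_{x\in\mathbb{R}^n} f(x)+r(x)$ subject to $c(x)=0$, where $f:\mathbb{R}^n\to\mathbb{R}$ and $c:\mathbb{R}^n\to\mathbb{R}^m$ ($m\le n$) are continuously differentiable and $r:\mathbb{R}^n\to\mathbb{R}_{\ge 0}$ is convex. Write $g(x)=\nabla f(x)$, $J(x)=\nabla c(x)^T$, and $f_k=f(x_k)$, $g_k=g(x_k)$, $c_k=c(x_k)$, $J_k=J(x_k)$, $r_k=r(x_k)$. All norms are Euclidean (spectral norm for matrices). Merit function: $\Phi_\tau(x)=\tau(f(x)+r(x))+\|c(x)\|_2$. Algorithm: inputs $x_0$, $\alpha_0>0$, $\tau_{-1}>0$; constants $\kappa_v>0$, $\sigma_c,\epsilon_\tau,\xi,\eta\in(0,1)$, $\sigma_u\in(0,1/2]$, $\bar\sigma_u:=\sigma_u+\tfrac12$.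 For $k=0,1,\dots$: 1. If $J_k^Tc_k\ne0$, compute $v_k$ with $v_k\in\mathrm{Range}(J_k^T)$, $\|v_k\|_2\le\kappa_v\alpha_k\|J_k^Tc_k\|_2$, $\|c_k+J_kv_k\|_2\le\|c_k+J_kv_k^c\|_2$, where $v_k^c=-\beta_k^cJ_k^Tc_k$ with $\beta_k^c$ minimizing $\tfrac12\|c_k-\beta J_kJ_k^Tc_k\|_2^2$ over $0\le\beta\le\kappa_v\alpha_k$. Otherwise set $v_k=0$, and if $c_k\ne0$ terminate. 2. Let $u_k$ be the unique minimizer of $g_k^Tu+\tfrac1{2\alpha_k}\|u\|_2^2+r(x_k+v_k+u)$ subject to $J_ku=0$; set $s_k=v_k+u_k$. If $s_k=0$, terminate. 3. Let $D_k:=g_k^Ts_k+\bar\sigma_u\|s_k\|_2^2/\alpha_k+r(x_k+s_k)-r_k$; $\tau_{k,\mathrm{trial}}=\infty$ if $D_k\le0$, else $\tau_{k,\mathrm{trial}}=(1-\sigma_c)(\|c_k\|_2-\|c_k+J_kv_k\|_2)/D_k$. Set $\tau_k=\tau_{k-1}$ if $\tau_{k-1}\le\tau_{k,\mathrm{trial}}$, else $\tau_k=\min\{(1-\epsilon_\tau)\tau_{k-1},\tau_{k,\mathrm{trial}}\}$. 4. With $\Delta q_k(s,\tau):=-\tau(g_k^Ts+\tfrac1{2\alpha_k}\|s\|_2^2+r(x_k+s)-r_k)+\|c_k\|_2-\|c_k+J_ks\|_2$: if $\Phi_{\tau_k}(x_k+s_k)\le\Phi_{\tau_k}(x_k)-\eta\Delta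 q_k(s_k,\tau_k)$ set $x_{k+1}=x_k+s_k$, $\alpha_{k+1}=\alpha_k$ (iteration $k$ successful; $\mathcal S$ is the set of successful iterations); else $x_{k+1}=x_k$, $\alpha_{k+1}=\xi\alpha_k$. Standing assumption: there is an open convex set $\mathcal X$ containing all iterates $x_k$ and trial points $x_k+s_k$, and positive constants such that for all $x\in\mathcal X$: $f$ is bounded below, $\|\nabla f(x)\|_2\le\kappa_{\nabla f}$, $\|c(x)\|_2\le\kappa_c$, $\|J(x)\|_2\le\kappa_{\nabla c}$, every $w\in\partial r(x)$ has $\|w\|_2\le\kappa_{\partial r}$; $\nabla f$ is $L_g$-Lipschitz and $J$ is $L_J$-Lipschitz on $\mathcal X$. Constants: with $K:=2\kappa_v\kappa_{\nabla c}(\kappa_{\nabla f}+\kappa_{\partial r}+\bar\sigma_u\kappa_c\kappa_v\kappa_{\nabla c})$, $\tau_{\min,\mathrm{trial}}:=\min\{(1-\sigma_c)\kappa_v\sigma_{\min}^2/K,\ (1-\sigma_c)(\sigma_{\min}/\kappa_{\nabla c})^2/(K\alpha_0)\}$ and $\tau_{\min}:=\min\{\tau_0,(1-\epsilon_\tau)\tau_{\min,\mathrm{trial}}\}$. *)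

theory Defs
  imports "HOL-Analysis.Analysis"
begin

definition spec_norm :: "real^'n^'m \<Rightarrow> real" where
  "spec_norm A = onorm (\<lambda>h. A *v h)"

text \<open>Smallest singular value of an m x n matrix with m \<le> n
  (variational characterisation: min over unit y of norm of A^T y).\<close>
definition sigma_min_sv :: "real^'n^'m \<Rightarrow> real" where
  "sigma_min_sv A = Inf ((\<lambda>y. norm (transpose A *v y)) ` {y. norm y = 1})"

definition subdiff :: "(real^'n \<Rightarrow> real) \<Rightarrow> real^'n \<Rightarrow> (real^'n) set" where
  "subdiff r z = {w. \<forall>y. r z + w \<bullet> (y - z) \<le> r y}"

definition merit :: "(real^'n \<Rightarrow> real) \<Rightarrow> (real^'n \<Rightarrow> real) \<Rightarrow> (real^'n \<Rightarrow> real^'m)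
    \<Rightarrow> real \<Rightarrow> real^'n \<Rightarrow> real" where
  "merit f r c t z = t * (f z + r z) + norm (c z)"

definition delta_q :: "(real^'n \<Rightarrow> real^'n) \<Rightarrow> (real^'n \<Rightarrow> real^'m) \<Rightarrow> (real^'n \<Rightarrow> real^'n^'m)
    \<Rightarrow> (real^'n \<Rightarrow> real) \<Rightarrow> real \<Rightarrow> real^'n \<Rightarrow> real^'n \<Rightarrow> real \<Rightarrow> real" where
  "delta_q g c J r a xk s t =
     - t * (g xk \<bullet> s + (norm s)\<^sup>2 / (2 * a) + r (xk + s) - r xk)
     + norm (c xk) - norm (c xk + J xk *v s)"

definition u_obj :: "(real^'n \<Rightarrow> real^'n) \<Rightarrow> (real^'n \<Rightarrow> real) \<Rightarrow> real \<Rightarrow> real^'n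
    \<Rightarrow> real^'n \<Rightarrow> real^'n \<Rightarrow> real" where
  "u_obj g r a xk vk w = g xk \<bullet> w + (norm w)\<^sup>2 / (2 * a) + r (xk + vk + w)"

definition successful ::
  "(real^'n \<Rightarrow> real) \<Rightarrow> (real^'n \<Rightarrow> real^'n) \<Rightarrow> (real^'n \<Rightarrow> real^'m) \<Rightarrow> (real^'n \<Rightarrow> real^'n^'m)
   \<Rightarrow> (real^'n \<Rightarrow> real) \<Rightarrow> real \<Rightarrow> (nat \<Rightarrow> real^'n) \<Rightarrow> (nat \<Rightarrow> real) \<Rightarrow> (nat \<Rightarrow> real)
   \<Rightarrow> (nat \<Rightarrow> real^'n) \<Rightarrow> (nat \<Rightarrow> real^'n) \<Rightarrow> nat \<Rightarrow> bool" where
  "successful f g c J r eta x alpha tau v u k \<longleftrightarrow>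
     merit f r c (tau k) (x k + (v k + u k))
       \<le> merit f r c (tau k) (x k) - eta * delta_q g c J r (alpha k) (x k) (v k + u k) (tau k)"

text \<open>The sequences x, alpha, tau, v, u (and the Cauchy step sizes beta)
  are generated by the algorithm (Steps 1-4) with the given data and constants.
  Termination tests are not part of this predicate.\<close>
definition alg_iterates ::
  "(real^'n \<Rightarrow> real) \<Rightarrow> (real^'n \<Rightarrow> real^'n) \<Rightarrow> (real^'n \<Rightarrow> real^'m) \<Rightarrow> (real^'n \<Rightarrow> real^'n^'m)
   \<Rightarrow> (real^'n \<Rightarrow> real) \<Rightarrow> real \<Rightarrow> real \<Rightarrow> real \<Rightarrow> real \<Rightarrow> real \<Rightarrow> real
   \<Rightarrow> real \<Rightarrow> real
   \<Rightarrow> (nat \<Rightarrow> real^'n) \<Rightarrow> (nat \<Rightarrow> real) \<Rightarrow> (nat \<Rightarrow> real)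
   \<Rightarrow> (nat \<Rightarrow> real^'n) \<Rightarrow> (nat \<Rightarrow> real^'n) \<Rightarrow> (nat \<Rightarrow> real) \<Rightarrow> bool" where
  "alg_iterates f g c J r kappa_v sigma_c eps_tau xi eta sigma_u alpha0 tau_m1
      x alpha tau v u beta \<longleftrightarrow>
   alpha 0 = alpha0 \<and>
   (\<forall>k. let xk = x k; ck = c xk; Jk = J xk; ak = alpha k; sk = v k + u k;
            Jtc = transpose Jk *v ck;
            Dk = g xk \<bullet> sk + (sigma_u + 1/2) * (norm sk)\<^sup>2 / ak + r (xk + sk) - r xk;
            tprev = (if k = 0 then tau_m1 else tau (k - 1))
        in
      \<comment> \<open>Step 1\<close>
      (Jtc \<noteq> 0 \<longrightarrow>
         v k \<in> range (\<lambda>y. transpose Jk *v y) \<and>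
         norm (v k) \<le> kappa_v * ak * norm Jtc \<and>
         0 \<le> beta k \<and> beta k \<le> kappa_v * ak \<and>
         (\<forall>b. 0 \<le> b \<and> b \<le> kappa_v * ak \<longrightarrow>
            (norm (ck - beta k *\<^sub>R (Jk *v Jtc)))\<^sup>2 / 2 \<le> (norm (ck - b *\<^sub>R (Jk *v Jtc)))\<^sup>2 / 2) \<and>
         norm (ck + Jk *v v k) \<le> norm (ck + Jk *v ((- beta k) *\<^sub>R Jtc))) \<and>
      (Jtc = 0 \<longrightarrow> v k = 0) \<and>
      \<comment> \<open>Step 2: u k is the unique minimiser of the subproblem on the null space of Jk\<close>
      Jk *v u k = 0 \<and>
      (\<forall>w. Jk *v w = 0 \<longrightarrow> u_obj g r ak xk (v k) (u k) \<le> u_obj g r ak xk (v k) w) \<and>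
      (\<forall>w. Jk *v w = 0 \<and> u_obj g r ak xk (v k) w \<le> u_obj g r ak xk (v k) (u k) \<longrightarrow> w = u k) \<and>
      \<comment> \<open>Step 3: merit parameter update (tau_trial = infinity when Dk \<le> 0)\<close>
      (Dk \<le> 0 \<longrightarrow> tau k = tprev) \<and>
      (0 < Dk \<longrightarrow>
         (let tt = (1 - sigma_c) * (norm ck - norm (ck + Jk *v v k)) / Dk in
          tau k = (if tprev \<le> tt then tprev else min ((1 - eps_tau) * tprev) tt))) \<and>
      \<comment> \<open>Step 4\<close>
      (successful f g c J r eta x alpha tau v u k \<longrightarrow> x (Suc k) = xk + sk \<and> alpha (Suc k) = ak) \<and>
      (\<not> successful f g c J r eta x alpha tau v u k \<longrightarrow> x (Suc k) = xk \<and> alpha (Suc k) = xi * ak))"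

end

theory Submission
  imports Defs
begin

lemma subgrad_exists:
  fixes r :: "real^'n \<Rightarrow> real"
  assumes "convex_on UNIV r"
  shows "\<exists>w. w \<in> subdiff r z"
proof -
  define S where "S = {p :: (real^'n) \<times> real. r (fst p) < snd p}"
  define T where "T = {(z, r z)}"
  have mem: "u *\<^sub>R p + v *\<^sub>R q \<in> S" if hp: "p \<in> S" "q \<in> S" "0 \<le> u" "0 \<le> v" "u + v = 1" for p q u v
  proof -
    obtain x a where p: "p = (x, a)" by (cases p)
    obtain y b where q: "q = (y, b)" by (cases q)
    have h: "r x < a" "r y < b" "0 \<le> u" "0 \<le> v" "u + v = 1" using hp p q unfolding S_def by auto
    have "r (u *\<^sub>R x + v *\<^sub>R y) \<le> u * r x + v * r y"
      using assms h unfolding convex_on_def by auto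
    also have "\<dots> < u * a + v * b"
    proof (cases "u = 0")
      case True then show ?thesis using h by auto
    next
      case False then have "u * r x < u * a" using h by auto
      moreover have "v * r y \<le> v * b" using h by (intro mult_left_mono) auto
      ultimately show ?thesis by linarith
    qed
    finally show ?thesis unfolding S_def p q by simp
  qed
  have cS: "convex S" unfolding convex_def using mem by blast
  have cT: "convex T" unfolding T_def by simp
  have ne: "S \<noteq> {}" "T \<noteq> {}" unfolding S_def T_def by (auto intro!: exI[of _ "r z + 1"] exI[of _ z])
  have dj: "S \<inter> T = {}" unfolding S_def T_def by auto
  obtain a b where ab: "a \<noteq> 0" "\<forall>x\<in>S. inner a x \<le> b" "\<forall>x\<in>T. inner a x \<ge> b"
    using separating_hyperplane_sets[OF cS cT ne dj] by blast
  obtain a1 a0 where a: "a = (a1, a0)" by (cases a)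
  have key: "a1 \<bullet> y + a0 * t \<le> a1 \<bullet> z + a0 * r z" if "r y < t" for y t
  proof -
    have "inner a (y, t) \<le> b" using ab(2) that unfolding S_def by auto
    moreover have "inner a (z, r z) \<ge> b" using ab(3) unfolding T_def by auto
    ultimately show ?thesis using a by (simp add: inner_Pair)
  qed
  have a0neg: "a0 < 0"
  proof (rule ccontr)
    assume "\<not> a0 < 0"
    then have a0: "a0 \<ge> 0" by simp
    show False
    proof (cases "a0 = 0")
      case True
      then have "a1 \<noteq> 0" using ab(1) a by (auto simp: zero_prod_def)
      have "a1 \<bullet> (z + a1) \<le> a1 \<bullet> z" using key[of "z + a1" "r (z + a1) + 1"] True by simp
      then have "a1 \<bullet> a1 \<le> 0" by (simp add: inner_add_right)
      then show False using \<open>a1 \<noteq> 0\<close> inner_gt_zero_iff[of a1] by linarith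
    next
      case False
      then have a0p: "a0 > 0" using a0 by simp
      have "a1 \<bullet> z + a0 * (r z + 1) \<le> a1 \<bullet> z + a0 * r z" using key[of z "r z + 1"] by simp
      then show False using a0p by (simp add: algebra_simps)
    qed
  qed
  define w where "w = (-1 / a0) *\<^sub>R a1"
  have "r z + w \<bullet> (y - z) \<le> r y" for y
  proof (rule field_le_epsilon)
    fix e :: real assume e: "0 < e"
    have "a1 \<bullet> y + a0 * (r y + e) \<le> a1 \<bullet> z + a0 * r z" using key[of y "r y + e"] e by simp
    then have "a1 \<bullet> (y - z) \<le> - a0 * (r y + e - r z)" by (simp add: inner_diff_right algebra_simps)
    then have "a1 \<bullet> (y - z) / (- a0) \<le> r y + e - r z" using a0neg by (simp add: divide_simps mult.commute)
    moreover have "w \<bullet> (y - z) = a1 \<bullet> (y - z) / (- a0)" unfolding w_def by (simp add: divide_simps)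
    ultimately show "r z + w \<bullet> (y - z) \<le> r y + e" by linarith
  qed
  then show ?thesis unfolding subdiff_def by blast
qed


lemma D_bound:
  fixes r :: "real^'n \<Rightarrow> real" and g0 v u x :: "real^'n"
  assumes cvx: "convex_on UNIV r"
    and X: "open X" "x + (v + u) \<in> X"
    and sub: "\<forall>y\<in>X. \<forall>w\<in>subdiff r y. norm w \<le> kr"
    and opt: "\<forall>e. 0 < e \<and> e < 1 \<longrightarrow> g0 \<bullet> u + (norm u)\<^sup>2 / (2*a) + r (x + v + u)
               \<le> g0 \<bullet> ((1-e) *\<^sub>R u) + (norm ((1-e) *\<^sub>R u))\<^sup>2 / (2*a) + r (x + v + (1-e) *\<^sub>R u)"
    and orth: "v \<bullet> u = 0" and a: "0 < a" and sb: "sb \<le> 1" and gb: "norm g0 \<le> kf"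
  shows "g0 \<bullet> (v + u) + sb * (norm (v + u))\<^sup>2 / a + r (x + (v + u)) - r x
          \<le> (kf + kr) * norm v + sb * (norm v)\<^sup>2 / a"
proof -
  define z where "z = x + (v + u)"
  obtain d where d: "d > 0" "ball z d \<subseteq> X" using X open_contains_ball z_def by blast
  have nvu: "(norm (v + u))\<^sup>2 = (norm v)\<^sup>2 + (norm u)\<^sup>2"
    using orth by (simp add: power2_norm_eq_inner inner_add_left inner_add_right inner_commute)
  have gv: "g0 \<bullet> v \<le> kf * norm v"
    using Cauchy_Schwarz_ineq2[of g0 v] gb by (meson mult_right_mono norm_ge_zero order_trans abs_le_D1)
  have main: "r z - r x \<le> - (g0 \<bullet> u) - (1 - e/2) * (norm u)\<^sup>2 / a + kr * norm v"
    if e: "0 < e" "e < 1" "e * norm u < d" for e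
  proof -
    define y1 where "y1 = z - e *\<^sub>R u"
    have y1X: "y1 \<in> X" using d e unfolding y1_def by (auto simp: dist_norm)
    obtain w where w: "w \<in> subdiff r y1" using subgrad_exists[OF cvx] by blast
    have nw: "norm w \<le> kr" using sub y1X w by blast
    have lip: "r y1 - r (y1 - e *\<^sub>R v) \<le> e * kr * norm v"
    proof -
      have "r y1 + w \<bullet> ((y1 - e *\<^sub>R v) - y1) \<le> r (y1 - e *\<^sub>R v)" using w unfolding subdiff_def by blast
      then have "r y1 - r (y1 - e *\<^sub>R v) \<le> e * (w \<bullet> v)" by (simp add: inner_diff_right)
      also have "w \<bullet> v \<le> kr * norm v"
        using Cauchy_Schwarz_ineq2[of w v] nw by (meson mult_right_mono norm_ge_zero order_trans abs_le_D1)
      then have "e * (w \<bullet> v) \<le> e * (kr * norm v)" using e by (intro mult_left_mono) auto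
      finally show ?thesis by simp
    qed
    have cv: "r ((1 - e) *\<^sub>R z + e *\<^sub>R x) \<le> (1 - e) * r z + e * r x"
      using convex_onD[OF cvx, of e z x] e by simp
    have eq1: "(1 - e) *\<^sub>R z + e *\<^sub>R x = y1 - e *\<^sub>R v"
      unfolding y1_def z_def by (simp add: algebra_simps)
    have o: "g0 \<bullet> u + (norm u)\<^sup>2 / (2*a) + r z
               \<le> g0 \<bullet> ((1-e) *\<^sub>R u) + (norm ((1-e) *\<^sub>R u))\<^sup>2 / (2*a) + r y1"
      using opt e unfolding z_def y1_def by (simp add: algebra_simps)
    have o2: "(norm ((1-e) *\<^sub>R u))\<^sup>2 = (1-e)^2 * (norm u)\<^sup>2" using e by (simp add: power_mult_distrib)
    have cv2: "r (y1 - e *\<^sub>R v) \<le> (1 - e) * r z + e * r x" using cv unfolding eq1 .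
    have s1: "e * (r z - r x) \<le> r z - r y1 + e * kr * norm v" using cv2 lip by (simp add: algebra_simps)
    define q where "q = (norm u)\<^sup>2 / (2*a)"
    have o3: "g0 \<bullet> u + q + r z \<le> (1-e) * (g0 \<bullet> u) + (1-e)^2 * q + r y1"
      using o unfolding o2 q_def by (simp add: mult.assoc)
    have s2: "r z - r y1 \<le> - e * (g0 \<bullet> u) - (2*e - e^2) * q"
      using o3 by (simp add: algebra_simps power2_eq_square)
    have s3: "(2*e - e^2) * q = e * ((1 - e/2) * (norm u)\<^sup>2 / a)" using a unfolding q_def
      by (simp add: field_simps power2_eq_square)
    have "e * (r z - r x) \<le> e * (- (g0 \<bullet> u) - (1 - e/2) * (norm u)\<^sup>2 / a + kr * norm v)"
      using s1 s2 s3 by (simp add: algebra_simps)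
    then show ?thesis using e by simp
  qed
  show ?thesis
  proof (rule field_le_epsilon)
    fix t :: real assume t: "0 < t"
    define e where "e = min (1/2) (min (d / (2 * (norm u + 1))) (t * a / ((norm u)\<^sup>2 + 1)))"
    have p1: "0 < d / (2 * (norm u + 1))" using d by (intro divide_pos_pos) (auto intro: add_nonneg_pos)
    have p2: "0 < t * a / ((norm u)\<^sup>2 + 1)" using t a by (simp add: add_nonneg_pos)
    have e0: "0 < e" using p1 p2 unfolding e_def by simp
    have e1: "e < 1" unfolding e_def by simp
    have "e * norm u \<le> d / (2 * (norm u + 1)) * norm u"
      unfolding e_def by (intro mult_right_mono) auto
    also have "\<dots> < d" using d by (simp add: divide_simps) (smt (verit) mult_pos_pos norm_ge_zero)
    finally have e2: "e * norm u < d" .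
    have "e * (norm u)\<^sup>2 / (2*a) \<le> t * a / ((norm u)\<^sup>2 + 1) * (norm u)\<^sup>2 / (2 * a)"
      using a unfolding e_def by (intro divide_right_mono mult_right_mono) auto
    also have "\<dots> \<le> t" using a t by (simp add: divide_simps) (smt (verit) mult_pos_pos zero_le_power2 mult_nonneg_nonneg)
    finally have e3: "e * (norm u)\<^sup>2 / (2*a) \<le> t" .
    have m: "r z - r x \<le> - (g0 \<bullet> u) - (1 - e/2) * (norm u)\<^sup>2 / a + kr * norm v" using main e0 e1 e2 by blast
    have sbu: "(sb - 1) * (norm u)\<^sup>2 / a \<le> 0" using sb a by (intro divide_nonpos_pos mult_nonpos_nonneg) auto
    have "g0 \<bullet> (v + u) + sb * (norm (v + u))\<^sup>2 / a + r (x + (v + u)) - r x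
        = g0 \<bullet> v + g0 \<bullet> u + sb * (norm v)\<^sup>2 / a + sb * (norm u)\<^sup>2 / a + (r z - r x)"
      unfolding z_def nvu by (simp add: inner_add_right add_divide_distrib distrib_left)
    also have "\<dots> \<le> g0 \<bullet> v + sb * (norm v)\<^sup>2 / a + kr * norm v + (sb - 1) * (norm u)\<^sup>2 / a + e * (norm u)\<^sup>2 / (2*a)"
      using m by (simp add: algebra_simps add_divide_distrib diff_divide_distrib)
    also have "\<dots> \<le> (kf + kr) * norm v + sb * (norm v)\<^sup>2 / a + t"
      using gv sbu e3 by (simp add: algebra_simps)
    finally show "g0 \<bullet> (v + u) + sb * (norm (v + u))\<^sup>2 / a + r (x + (v + u)) - r x \<le> (kf + kr) * norm v + sb * (norm v)\<^sup>2 / a + t" .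
  qed
qed


lemma adj: fixes A :: "real^'n^'m" shows "(transpose A *v y) \<bullet> u = y \<bullet> (A *v u)"
  by (simp add: dot_lmul_matrix)

lemma spec_bound: fixes A :: "real^'n^'m" shows "norm (A *v h) \<le> spec_norm A * norm h"
  unfolding spec_norm_def using onorm[OF matrix_vector_mul_bounded_linear] by blast

lemma spec_bound2: fixes A :: "real^'n^'m"
  assumes "spec_norm A \<le> k" shows "norm (A *v h) \<le> k * norm h"
  using spec_bound[of A h] mult_right_mono[OF assms norm_ge_zero[of h]] by linarith

lemma aJ_bound: fixes A :: "real^'n^'m"
  assumes "spec_norm A \<le> kJ" shows "norm (transpose A *v c) \<le> kJ * norm c"
proof -
  define a where "a = transpose A *v c"
  have "(norm a)\<^sup>2 = c \<bullet> (A *v a)" unfolding a_def power2_norm_eq_inner by (simp add: dot_lmul_matrix)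
  also have "\<dots> \<le> norm c * norm (A *v a)" by (rule norm_cauchy_schwarz)
  also have "\<dots> \<le> norm c * (kJ * norm a)"
    using spec_bound2[OF assms, of a] by (intro mult_left_mono) auto
  finally have h: "(norm a)\<^sup>2 \<le> norm c * (kJ * norm a)" .
  show ?thesis
  proof (cases "a = 0")
    case True
    have "0 \<le> kJ" using assms onorm_pos_le[OF matrix_vector_mul_bounded_linear, of A] unfolding spec_norm_def by linarith
    then show ?thesis using True a_def by simp
  next
    case False
    then have "norm a > 0" by simp
    then show ?thesis using h unfolding a_def[symmetric] by (simp add: power2_eq_square algebra_simps)
  qed
qed

lemma smin_bound: fixes A :: "real^'n^'m"
  assumes "smin \<le> sigma_min_sv A" shows "smin * norm c \<le> norm (transpose A *v c)"
proof (cases "c = 0")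
  case True then show ?thesis by simp
next
  case False
  define y where "y = (1 / norm c) *\<^sub>R c"
  have ny: "norm y = 1" using False unfolding y_def by simp
  have "sigma_min_sv A \<le> norm (transpose A *v y)" unfolding sigma_min_sv_def
    by (rule cInf_lower) (use ny in \<open>auto intro: bdd_belowI[where m=0]\<close>)
  also have "\<dots> = norm (transpose A *v c) / norm c" unfolding y_def
    by (simp add: matrix_vector_mult_scaleR)
  finally have "smin \<le> norm (transpose A *v c) / norm c" using assms by linarith
  then show ?thesis using False by (simp add: field_simps)
qed

lemma mono_aux:
  fixes h h' :: "real \<Rightarrow> real"
  assumes "\<forall>t\<in>{0..1}. (h has_real_derivative h' t) (at t)" "\<forall>t\<in>{0..1}. h' t \<le> K * t"
  shows "h 1 - h 0 \<le> K / 2"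
proof -
  define p where "p t = h t - K * t^2 / 2" for t
  have "p 1 \<le> p 0"
  proof (rule DERIV_nonpos_imp_nonincreasing[of 0 1 p])
    fix t :: real assume t: "0 \<le> t" "t \<le> 1"
    have "(p has_real_derivative (h' t - K * t)) (at t)"
      unfolding p_def using assms(1) t by (auto intro!: derivative_eq_intros)
    then show "\<exists>y. (p has_real_derivative y) (at t) \<and> y \<le> 0" using assms(2) t by auto
  qed simp
  then show ?thesis unfolding p_def by simp
qed


lemma norm_diff_sq: "(norm (c - w::'a::real_inner))\<^sup>2 = (norm c)\<^sup>2 - 2*(c \<bullet> w) + (norm w)\<^sup>2"
  unfolding power2_norm_eq_inner by (simp add: inner_diff_left inner_diff_right inner_commute)

lemma num_bound:
  fixes c :: "real^'m" and A :: "real^'n^'m" and v :: "real^'n"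
  assumes sA: "spec_norm A \<le> kJ" and kJ: "0 < kJ" and ka: "0 < ka"
    and a: "a = transpose A *v c" "a \<noteq> 0" and b: "0 \<le> \<beta>" "\<beta> \<le> ka"
    and mn: "\<forall>b. 0 \<le> b \<and> b \<le> ka \<longrightarrow>
            (norm (c - \<beta> *\<^sub>R (A *v a)))\<^sup>2 / 2 \<le> (norm (c - b *\<^sub>R (A *v a)))\<^sup>2 / 2"
    and hv: "norm (c + A *v v) \<le> norm (c + A *v ((- \<beta>) *\<^sub>R a))"
  shows "norm (c + A *v v) \<le> norm c"
    and "min ka (1 / kJ\<^sup>2) * (norm a)\<^sup>2 / (2 * norm c) \<le> norm c - norm (c + A *v v)"
proof -
  define N where "N = norm (c + A *v v)"
  have e1: "c + A *v ((- \<beta>) *\<^sub>R a) = c - \<beta> *\<^sub>R (A *v a)"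
    using matrix_vector_mult_scaleR[of A "- \<beta>" a] by simp
  have sq: "norm (c - \<beta> *\<^sub>R (A *v a)) \<le> norm (c - b *\<^sub>R (A *v a))" if "0 \<le> b" "b \<le> ka" for b
  proof -
    have "(norm (c - \<beta> *\<^sub>R (A *v a)))\<^sup>2 \<le> (norm (c - b *\<^sub>R (A *v a)))\<^sup>2" using mn that by auto
    then show ?thesis by (rule power2_le_imp_le) simp
  qed
  have N1: "N \<le> norm (c - \<beta> *\<^sub>R (A *v a))" unfolding N_def using hv e1 by simp
  show "norm (c + A *v v) \<le> norm c" using N1 sq[of 0] ka unfolding N_def by simp
  define bs where "bs = min ka (1 / kJ\<^sup>2)"
  have bs0: "0 \<le> bs" "bs \<le> ka" "bs \<le> 1 / kJ\<^sup>2" unfolding bs_def using ka by auto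
  have ca: "c \<bullet> (A *v a) = (norm a)\<^sup>2" unfolding a(1) power2_norm_eq_inner by (simp add: dot_lmul_matrix)
  have Aa: "(norm (A *v a))\<^sup>2 \<le> kJ\<^sup>2 * (norm a)\<^sup>2"
    using spec_bound2[OF sA, of a] by (metis norm_ge_zero power_mono power_mult_distrib)
  have "(norm (c - bs *\<^sub>R (A *v a)))\<^sup>2 = (norm c)\<^sup>2 - 2 * bs * (c \<bullet> (A *v a)) + bs\<^sup>2 * (norm (A *v a))\<^sup>2"
    by (simp add: norm_diff_sq power_mult_distrib)
  also have "\<dots> \<le> (norm c)\<^sup>2 - 2 * bs * (norm a)\<^sup>2 + bs\<^sup>2 * (kJ\<^sup>2 * (norm a)\<^sup>2)"
    unfolding ca using Aa by (intro add_left_mono mult_left_mono) auto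
  also have "bs\<^sup>2 * (kJ\<^sup>2 * (norm a)\<^sup>2) \<le> bs * (norm a)\<^sup>2"
  proof -
    have "bs * kJ\<^sup>2 \<le> 1" using bs0(3) kJ by (simp add: field_simps)
    moreover have "0 \<le> bs * (norm a)\<^sup>2" using bs0(1) by simp
    ultimately have "(bs * kJ\<^sup>2) * (bs * (norm a)\<^sup>2) \<le> 1 * (bs * (norm a)\<^sup>2)"
      by (rule mult_right_mono)
    moreover have "bs\<^sup>2 * (kJ\<^sup>2 * (norm a)\<^sup>2) = (bs * kJ\<^sup>2) * (bs * (norm a)\<^sup>2)"
      by (simp only: power2_eq_square mult_ac)
    ultimately show ?thesis by linarith
  qed
  finally have B1: "(norm (c - bs *\<^sub>R (A *v a)))\<^sup>2 \<le> (norm c)\<^sup>2 - bs * (norm a)\<^sup>2" by simp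
  have N0: "0 \<le> N" unfolding N_def by simp
  have "N \<le> norm (c - bs *\<^sub>R (A *v a))" using N1 sq[OF bs0(1,2)] by linarith
  then have "N\<^sup>2 \<le> (norm (c - bs *\<^sub>R (A *v a)))\<^sup>2" using N0 by (rule power_mono)
  with B1 have NN: "N\<^sup>2 \<le> (norm c)\<^sup>2 - bs * (norm a)\<^sup>2" by linarith
  have c0: "c \<noteq> 0" using a by auto
  have id: "(norm c)\<^sup>2 - N\<^sup>2 + (norm c - N)\<^sup>2 = 2 * norm c * (norm c - N)"
    by (simp add: power2_eq_square algebra_simps)
  have sq0: "0 \<le> (norm c - N)\<^sup>2" by simp
  have K0: "bs * (norm a)\<^sup>2 \<le> 2 * norm c * (norm c - N)" using NN id sq0 by linarith
  then have K: "bs * (norm a)\<^sup>2 \<le> (norm c - N) * (2 * norm c)" by (simp add: mult.commute)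
  have "bs * (norm a)\<^sup>2 / (2 * norm c) \<le> norm c - N"
    using K c0 by (subst pos_divide_le_eq) auto
  then show "min ka (1 / kJ\<^sup>2) * (norm a)\<^sup>2 / (2 * norm c) \<le> norm c - norm (c + A *v v)"
    unfolding bs_def N_def .
qed


lemma succ_arith:
  fixes tf1 tf0 tG W1 W2 C1 CL C0 hq Zq tR1 tR0 \<eta> :: real
  assumes "tf1 \<le> tf0 + tG + W1" "C1 \<le> CL + W2" "W1 + W2 \<le> hq" "hq \<le> Zq"
    "(1-\<eta>)*(tG + tR1 - tR0 - (C0 - CL)) \<le> (1-\<eta>)*(- Zq)" "0 < \<eta>" "\<eta> < 1"
  shows "tf1 + tR1 + C1 \<le> tf0 + tR0 + C0 - \<eta>*(-(tG + hq + tR1 - tR0) + C0 - CL)"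
proof -
  have h: "(1-\<eta>)*hq \<le> (1-\<eta>)*Zq" using assms by (intro mult_left_mono) auto
  have "tG + tR1 - tR0 - (C0 - CL) + hq \<le> \<eta>*(tG + tR1 - tR0 - (C0 - CL)) + \<eta> * hq"
    using assms(5) h by (simp add: algebra_simps)
  then show ?thesis using assms(1-3) by (simp add: algebra_simps)
qed

lemma seg_in:
  fixes x s :: "'a::real_vector"
  assumes "convex X" "x \<in> X" "x + s \<in> X" "0 \<le> t" "t \<le> 1"
  shows "x + t *\<^sub>R s \<in> X"
proof -
  have "(1 - t) *\<^sub>R x + t *\<^sub>R (x + s) \<in> X" using assms by (intro convexD) auto
  moreover have "(1 - t) *\<^sub>R x + t *\<^sub>R (x + s) = x + t *\<^sub>R s" by (simp add: algebra_simps)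
  ultimately show ?thesis by simp
qed

lemma path_deriv:
  fixes F :: "'a::real_normed_vector \<Rightarrow> real"
  assumes "(F has_derivative (\<lambda>h. G h)) (at (x + t *\<^sub>R s))" "linear G"
  shows "((\<lambda>t. F (x + t *\<^sub>R s)) has_real_derivative G s) (at t)"
proof -
  have p: "((\<lambda>t. x + t *\<^sub>R s) has_derivative (\<lambda>d. d *\<^sub>R s)) (at t)"
    by (auto intro!: derivative_eq_intros)
  have "((\<lambda>t. F (x + t *\<^sub>R s)) has_derivative (\<lambda>d. G (d *\<^sub>R s))) (at t)"
    using has_derivative_compose[OF p assms(1)] by simp
  moreover have "(\<lambda>d. G (d *\<^sub>R s)) = (*) (G s)"
    using assms(2) by (auto simp: fun_eq_iff linear_scale mult.commute)
  ultimately show ?thesis unfolding has_field_derivative_def by simp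
qed

lemma taylor_f:
  fixes f :: "real^'n \<Rightarrow> real" and g :: "real^'n \<Rightarrow> real^'n"
  assumes fd: "\<forall>z. (f has_derivative (\<lambda>h. g z \<bullet> h)) (at z)"
    and cX: "convex X" "x \<in> X" "x + s \<in> X"
    and Lg: "\<forall>y\<in>X. \<forall>z\<in>X. norm (g y - g z) \<le> L * dist y z"
  shows "f (x + s) \<le> f x + g x \<bullet> s + L / 2 * (norm s)\<^sup>2"
proof -
  define h where "h t = f (x + t *\<^sub>R s) - t * (g x \<bullet> s)" for t
  define h' where "h' t = g (x + t *\<^sub>R s) \<bullet> s - g x \<bullet> s" for t
  have "h 1 - h 0 \<le> (L * (norm s)\<^sup>2) / 2"
  proof (rule mono_aux)
    show "\<forall>t\<in>{0..1}. (h has_real_derivative h' t) (at t)"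
    proof
      fix t :: real
      have "((\<lambda>t. f (x + t *\<^sub>R s)) has_real_derivative g (x + t *\<^sub>R s) \<bullet> s) (at t)"
        by (rule path_deriv[OF fd[rule_format]]) (simp add: bounded_linear.linear[OF bounded_linear_inner_right])
      then show "(h has_real_derivative h' t) (at t)" unfolding h_def h'_def
        by (auto intro!: derivative_eq_intros)
    qed
    show "\<forall>t\<in>{0..1}. h' t \<le> L * (norm s)\<^sup>2 * t"
    proof
      fix t :: real assume t: "t \<in> {0..1}"
      have xt: "x + t *\<^sub>R s \<in> X" using seg_in[OF cX] t by auto
      have "h' t = (g (x + t *\<^sub>R s) - g x) \<bullet> s" unfolding h'_def by (simp add: inner_diff_left)
      also have "\<dots> \<le> norm (g (x + t *\<^sub>R s) - g x) * norm s" by (rule norm_cauchy_schwarz)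
      also have "\<dots> \<le> (L * dist (x + t *\<^sub>R s) x) * norm s"
        using Lg xt cX(2) by (intro mult_right_mono) auto
      also have "dist (x + t *\<^sub>R s) x = t * norm s" using t by (simp add: dist_norm)
      finally show "h' t \<le> L * (norm s)\<^sup>2 * t" by (simp add: power2_eq_square mult_ac)
    qed
  qed
  then show ?thesis unfolding h_def by simp
qed

lemma taylor_c:
  fixes c :: "real^'n \<Rightarrow> real^'m" and J :: "real^'n \<Rightarrow> real^'n^'m"
  assumes cd: "\<forall>z. (c has_derivative (\<lambda>h. J z *v h)) (at z)"
    and cX: "convex X" "x \<in> X" "x + s \<in> X"
    and LJ: "\<forall>y\<in>X. \<forall>z\<in>X. spec_norm (J y - J z) \<le> L * dist y z"
  shows "norm (c (x + s) - c x - J x *v s) \<le> L / 2 * (norm s)\<^sup>2"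
proof (cases "c (x + s) - c x - J x *v s = 0")
  case True
  have "0 \<le> L * (norm s)\<^sup>2"
  proof (cases "s = 0")
    case False
    have "0 \<le> spec_norm (J (x + s) - J x)" unfolding spec_norm_def
      by (rule onorm_pos_le[OF matrix_vector_mul_bounded_linear])
    also have "\<dots> \<le> L * dist (x + s) x" using LJ cX(2,3) by blast
    finally have "0 \<le> L * norm s" by (simp add: dist_norm)
    then have "0 \<le> (L * norm s) * norm s" by simp
    then show ?thesis by (simp add: power2_eq_square mult.assoc)
  qed simp
  then show ?thesis using True by simp
next
  case False
  define E where "E = c (x + s) - c x - J x *v s"
  define e where "e = (1 / norm E) *\<^sub>R E"
  have ne: "norm e = 1" using False unfolding e_def E_def by simp
  define h where "h t = e \<bullet> c (x + t *\<^sub>R s) - t * (e \<bullet> (J x *v s))" for t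
  define h' where "h' t = e \<bullet> (J (x + t *\<^sub>R s) *v s) - e \<bullet> (J x *v s)" for t
  have "h 1 - h 0 \<le> (L * (norm s)\<^sup>2) / 2"
  proof (rule mono_aux)
    show "\<forall>t\<in>{0..1}. (h has_real_derivative h' t) (at t)"
    proof
      fix t :: real
      have d1: "((\<lambda>y. e \<bullet> c y) has_derivative (\<lambda>h. e \<bullet> (J (x + t *\<^sub>R s) *v h))) (at (x + t *\<^sub>R s))"
        using cd by (auto intro!: derivative_eq_intros)
      have "linear (\<lambda>h. e \<bullet> (J (x + t *\<^sub>R s) *v h))"
        by (intro linear_compose[of "(*v) (J (x + t *\<^sub>R s))" "inner e", unfolded o_def] matrix_vector_mul_linear bounded_linear.linear[OF bounded_linear_inner_right])
      then have "((\<lambda>t. e \<bullet> c (x + t *\<^sub>R s)) has_real_derivative e \<bullet> (J (x + t *\<^sub>R s) *v s)) (at t)"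
        using path_deriv[OF d1] by simp
      then show "(h has_real_derivative h' t) (at t)" unfolding h_def h'_def
        by (auto intro!: derivative_eq_intros)
    qed
    show "\<forall>t\<in>{0..1}. h' t \<le> L * (norm s)\<^sup>2 * t"
    proof
      fix t :: real assume t: "t \<in> {0..1}"
      have xt: "x + t *\<^sub>R s \<in> X" using seg_in[OF cX] t by auto
      have "h' t = e \<bullet> ((J (x + t *\<^sub>R s) - J x) *v s)" unfolding h'_def
        by (simp add: inner_diff_right matrix_vector_mult_diff_rdistrib)
      also have "\<dots> \<le> norm e * norm ((J (x + t *\<^sub>R s) - J x) *v s)" by (rule norm_cauchy_schwarz)
      also have "\<dots> \<le> (L * dist (x + t *\<^sub>R s) x) * norm s"
        using ne spec_bound2[of "J (x + t *\<^sub>R s) - J x"] LJ xt cX(2) by simp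
      also have "dist (x + t *\<^sub>R s) x = t * norm s" using t by (simp add: dist_norm)
      finally show "h' t \<le> L * (norm s)\<^sup>2 * t" by (simp add: power2_eq_square mult_ac)
    qed
  qed
  moreover have "h 1 - h 0 = e \<bullet> E" unfolding h_def E_def by (simp add: inner_diff_right)
  moreover have "e \<bullet> E = norm E" unfolding e_def using False E_def
    by (simp add: power2_norm_eq_inner[symmetric] power2_eq_square)
  ultimately show ?thesis unfolding E_def by simp
qed

theorem lemma3p14:
  fixes f :: "real^'n \<Rightarrow> real" and g :: "real^'n \<Rightarrow> real^'n"
    and c :: "real^'n \<Rightarrow> real^'m" and J :: "real^'n \<Rightarrow> real^'n^'m"
    and r :: "real^'n \<Rightarrow> real"
    and kappa_v sigma_c eps_tau xi eta sigma_u alpha0 tau_m1 :: real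
    and x :: "nat \<Rightarrow> real^'n" and alpha tau beta :: "nat \<Rightarrow> real"
    and v u :: "nat \<Rightarrow> real^'n"
    and k_f k_c k_J k_r L_g L_J smin :: real
  assumes dims: "CARD('m) \<le> CARD('n)"
    and f_C1: "\<forall>z. (f has_derivative (\<lambda>h. g z \<bullet> h)) (at z)" "continuous_on UNIV g"
    and c_C1: "\<forall>z. (c has_derivative (\<lambda>h. J z *v h)) (at z)" "continuous_on UNIV J"
    and r_convex: "convex_on UNIV r" and r_nonneg: "\<forall>z. 0 \<le> r z"
    and params: "0 < kappa_v" "0 < sigma_c" "sigma_c < 1" "0 < eps_tau" "eps_tau < 1"
      "0 < xi" "xi < 1" "0 < eta" "eta < 1" "0 < sigma_u" "sigma_u \<le> 1/2"
      "0 < alpha0" "0 < tau_m1"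
    and run: "alg_iterates f g c J r kappa_v sigma_c eps_tau xi eta sigma_u alpha0 tau_m1
                x alpha tau v u beta"
    and no_term: "\<forall>k. (transpose (J (x k)) *v c (x k) = 0 \<longrightarrow> c (x k) = 0) \<and> v k + u k \<noteq> 0"
    and pos_bounds: "0 < k_f" "0 < k_c" "0 < k_J" "0 < k_r" "0 < L_g" "0 < L_J"
    and standing: "\<exists>X. open X \<and> convex X \<and>
        (\<forall>k. x k \<in> X \<and> x k + (v k + u k) \<in> X) \<and>
        bdd_below (f ` X) \<and>
        (\<forall>z\<in>X. norm (g z) \<le> k_f \<and> norm (c z) \<le> k_c \<and> spec_norm (J z) \<le> k_J \<and>
                 (\<forall>w\<in>subdiff r z. norm w \<le> k_r)) \<and>
        (\<forall>y\<in>X. \<forall>z\<in>X. norm (g y - g z) \<le> L_g * dist y z \<and>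
                          spec_norm (J y - J z) \<le> L_J * dist y z)"
    and smin: "0 < smin" "\<forall>k. smin \<le> sigma_min_sv (J (x k))"
  defines "K \<equiv> 2 * kappa_v * k_J * (k_f + k_r + (sigma_u + 1/2) * k_c * kappa_v * k_J)"
  defines "tau_min_trial \<equiv> min ((1 - sigma_c) * kappa_v * smin\<^sup>2 / K)
                              ((1 - sigma_c) * (smin / k_J)\<^sup>2 / (K * alpha0))"
  defines "tau_min \<equiv> min (tau 0) ((1 - eps_tau) * tau_min_trial)"
  defines "S \<equiv> {k. successful f g c J r eta x alpha tau v u k}"
  defines "alpha_min \<equiv> min alpha0 (xi * tau_min / (tau_min * L_g + L_J))"
  shows "(\<forall>k. alpha k \<le> tau_min / (tau_min * L_g + L_J) \<longrightarrow> k \<in> S) \<and>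
         (\<forall>k. alpha_min \<le> alpha k) \<and> 0 < alpha_min \<and>
         finite {k. k \<notin> S} \<and>
         int (card {k. k \<notin> S})
           \<le> max 0 \<lceil>ln (tau_min / (alpha0 * (tau_min * L_g + L_J))) / ln xi\<rceil>"
proof -
  obtain X where Xo: "open X" and Xc: "convex X" and inX: "\<forall>k. x k \<in> X \<and> x k + (v k + u k) \<in> X"
    and Xb: "\<forall>z\<in>X. norm (g z) \<le> k_f \<and> norm (c z) \<le> k_c \<and> spec_norm (J z) \<le> k_J \<and>
                 (\<forall>w\<in>subdiff r z. norm w \<le> k_r)"
    and XL: "\<forall>y\<in>X. \<forall>z\<in>X. norm (g y - g z) \<le> L_g * dist y z \<and> spec_norm (J y - J z) \<le> L_J * dist y z"
    using standing by blast
  have A0: "alpha 0 = alpha0" using run unfolding alg_iterates_def by blast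
  have R: "(transpose (J (x k)) *v c (x k) \<noteq> 0 \<longrightarrow>
         v k \<in> range (\<lambda>y. transpose (J (x k)) *v y) \<and>
         norm (v k) \<le> kappa_v * alpha k * norm (transpose (J (x k)) *v c (x k)) \<and>
         0 \<le> beta k \<and> beta k \<le> kappa_v * alpha k \<and>
         (\<forall>b. 0 \<le> b \<and> b \<le> kappa_v * alpha k \<longrightarrow>
            (norm (c (x k) - beta k *\<^sub>R (J (x k) *v (transpose (J (x k)) *v c (x k)))))\<^sup>2 / 2
             \<le> (norm (c (x k) - b *\<^sub>R (J (x k) *v (transpose (J (x k)) *v c (x k)))))\<^sup>2 / 2) \<and>
         norm (c (x k) + J (x k) *v v k) \<le> norm (c (x k) + J (x k) *v ((- beta k) *\<^sub>R (transpose (J (x k)) *v c (x k))))) \<and>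
      (transpose (J (x k)) *v c (x k) = 0 \<longrightarrow> v k = 0) \<and>
      J (x k) *v u k = 0 \<and>
      (\<forall>w. J (x k) *v w = 0 \<longrightarrow> u_obj g r (alpha k) (x k) (v k) (u k) \<le> u_obj g r (alpha k) (x k) (v k) w) \<and>
      (g (x k) \<bullet> (v k + u k) + (sigma_u + 1/2) * (norm (v k + u k))\<^sup>2 / alpha k + r (x k + (v k + u k)) - r (x k) \<le> 0
         \<longrightarrow> tau k = (if k = 0 then tau_m1 else tau (k - 1))) \<and>
      (0 < g (x k) \<bullet> (v k + u k) + (sigma_u + 1/2) * (norm (v k + u k))\<^sup>2 / alpha k + r (x k + (v k + u k)) - r (x k) \<longrightarrow>
          tau k = (if (if k = 0 then tau_m1 else tau (k - 1)) \<le> (1 - sigma_c) * (norm (c (x k)) - norm (c (x k) + J (x k) *v v k)) / (g (x k) \<bullet> (v k + u k) + (sigma_u + 1/2) * (norm (v k + u k))\<^sup>2 / alpha k + r (x k + (v k + u k)) - r (x k))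
                   then (if k = 0 then tau_m1 else tau (k - 1))
                   else min ((1 - eps_tau) * (if k = 0 then tau_m1 else tau (k - 1))) ((1 - sigma_c) * (norm (c (x k)) - norm (c (x k) + J (x k) *v v k)) / (g (x k) \<bullet> (v k + u k) + (sigma_u + 1/2) * (norm (v k + u k))\<^sup>2 / alpha k + r (x k + (v k + u k)) - r (x k))))) \<and>
      (successful f g c J r eta x alpha tau v u k \<longrightarrow> x (Suc k) = x k + (v k + u k) \<and> alpha (Suc k) = alpha k) \<and>
      (\<not> successful f g c J r eta x alpha tau v u k \<longrightarrow> x (Suc k) = x k \<and> alpha (Suc k) = xi * alpha k)" for k
    using run unfolding alg_iterates_def Let_def by blast
  define Jtc where "Jtc k = transpose (J (x k)) *v c (x k)" for k
  define Dk where "Dk k = g (x k) \<bullet> (v k + u k) + (sigma_u + 1/2) * (norm (v k + u k))\<^sup>2 / alpha k + r (x k + (v k + u k)) - r (x k)" for k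
  define num where "num k = norm (c (x k)) - norm (c (x k) + J (x k) *v v k)" for k
  define tp where "tp k = (if k = 0 then tau_m1 else tau (k - 1))" for k
  define tt where "tt k = (1 - sigma_c) * num k / Dk k" for k
  have Rv1: "Jtc k \<noteq> 0 \<Longrightarrow> v k \<in> range (\<lambda>y. transpose (J (x k)) *v y) \<and>
         norm (v k) \<le> kappa_v * alpha k * norm (Jtc k) \<and>
         0 \<le> beta k \<and> beta k \<le> kappa_v * alpha k \<and>
         (\<forall>b. 0 \<le> b \<and> b \<le> kappa_v * alpha k \<longrightarrow>
            (norm (c (x k) - beta k *\<^sub>R (J (x k) *v Jtc k)))\<^sup>2 / 2
             \<le> (norm (c (x k) - b *\<^sub>R (J (x k) *v Jtc k)))\<^sup>2 / 2) \<and>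
         norm (c (x k) + J (x k) *v v k) \<le> norm (c (x k) + J (x k) *v ((- beta k) *\<^sub>R Jtc k))" for k
    using R[of k] unfolding Jtc_def by blast
  have Rv0: "Jtc k = 0 \<Longrightarrow> v k = 0" for k using R[of k] unfolding Jtc_def by blast
  have Ru: "J (x k) *v u k = 0" for k using R[of k] by blast
  have Ropt: "J (x k) *v w = 0 \<Longrightarrow> u_obj g r (alpha k) (x k) (v k) (u k) \<le> u_obj g r (alpha k) (x k) (v k) w" for k w
    using R[of k] by blast
  have Rt0: "Dk k \<le> 0 \<Longrightarrow> tau k = tp k" for k using R[of k] unfolding Dk_def tp_def by blast
  have Rt1: "0 < Dk k \<Longrightarrow> tau k = (if tp k \<le> tt k then tp k else min ((1 - eps_tau) * tp k) (tt k))" for k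
    using R[of k] unfolding Dk_def tp_def tt_def num_def by presburger
  have Rs: "k \<in> S \<Longrightarrow> x (Suc k) = x k + (v k + u k) \<and> alpha (Suc k) = alpha k" for k
    using R[of k] unfolding S_def by blast
  have Rf: "k \<notin> S \<Longrightarrow> x (Suc k) = x k \<and> alpha (Suc k) = xi * alpha k" for k
    using R[of k] unfolding S_def by blast
  have xX: "x k \<in> X" "x k + (v k + u k) \<in> X" for k using inX by auto
  have bnd: "norm (g (x k)) \<le> k_f" "norm (c (x k)) \<le> k_c" "spec_norm (J (x k)) \<le> k_J"
     "\<forall>y\<in>X. \<forall>w\<in>subdiff r y. norm w \<le> k_r" for k using Xb xX by auto
  have apos: "0 < alpha k \<and> alpha k \<le> alpha0" for k
  proof (induction k)
    case 0 then show ?case using A0 params by simp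
  next
    case (Suc k)
    then show ?case using Rs[of k] Rf[of k] params
      by (cases "k \<in> S") (auto simp: mult_le_cancel_right1 intro: order_trans[of _ "alpha k"] mult_left_le_one_le)
  qed
  have sb1: "sigma_u + 1/2 \<le> 1" "1/2 \<le> sigma_u + 1/2" using params by auto
  have orth: "v k \<bullet> u k = 0" for k
  proof (cases "Jtc k = 0")
    case True then show ?thesis using Rv0 by simp
  next
    case False
    then obtain y where "v k = transpose (J (x k)) *v y" using Rv1 by blast
    then show ?thesis using Ru[of k] adj[of "J (x k)" y "u k"] by simp
  qed
  have Db1: "Dk k \<le> (k_f + k_r) * norm (v k) + (sigma_u + 1/2) * (norm (v k))\<^sup>2 / alpha k" for k
    unfolding Dk_def
  proof (rule D_bound[OF r_convex Xo xX(2) bnd(4) _ orth _ sb1(1) bnd(1)])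
    show "0 < alpha k" using apos by blast
    show "\<forall>e. 0 < e \<and> e < 1 \<longrightarrow> g (x k) \<bullet> u k + (norm (u k))\<^sup>2 / (2 * alpha k) + r (x k + v k + u k)
           \<le> g (x k) \<bullet> ((1 - e) *\<^sub>R u k) + (norm ((1 - e) *\<^sub>R u k))\<^sup>2 / (2 * alpha k) + r (x k + v k + (1 - e) *\<^sub>R u k)"
    proof (intro allI impI)
      fix e :: real
      have "J (x k) *v ((1 - e) *\<^sub>R u k) = 0" using Ru[of k] by (simp add: matrix_vector_mult_scaleR)
      then show "g (x k) \<bullet> u k + (norm (u k))\<^sup>2 / (2 * alpha k) + r (x k + v k + u k)
           \<le> g (x k) \<bullet> ((1 - e) *\<^sub>R u k) + (norm ((1 - e) *\<^sub>R u k))\<^sup>2 / (2 * alpha k) + r (x k + v k + (1 - e) *\<^sub>R u k)"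
        using Ropt[of k] unfolding u_obj_def by blast
    qed
  qed
  have aJ: "norm (Jtc k) \<le> k_J * norm (c (x k))" for k unfolding Jtc_def by (rule aJ_bound[OF bnd(3)])
  have vb: "norm (v k) \<le> kappa_v * alpha k * norm (Jtc k)" for k
    using Rv1[of k] Rv0[of k] params apos[of k] by (cases "Jtc k = 0") auto
  have Db2: "Dk k \<le> K * alpha k * norm (c (x k)) / 2" for k
  proof -
    define nv where "nv = norm (v k)"
    define na where "na = norm (Jtc k)"
    define nc where "nc = norm (c (x k))"
    define a where "a = alpha k"
    define sb where "sb = sigma_u + 1/2"
    have h: "0 \<le> nv" "nv \<le> kappa_v * a * na" "0 \<le> na" "na \<le> k_J * nc" "0 \<le> nc" "nc \<le> k_c" "0 < a" "0 \<le> sb"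
      using vb[of k] aJ[of k] bnd(2)[of k] apos[of k] params unfolding nv_def na_def nc_def a_def sb_def by auto
    have p: "0 < kappa_v" "0 < k_J" "0 \<le> k_f + k_r" using params pos_bounds by auto
    have e1: "(k_f + k_r) * nv \<le> (k_f + k_r) * (kappa_v * a * (k_J * nc))"
      using h p by (intro mult_left_mono) (auto intro: order_trans mult_left_mono)
    have nv2: "nv\<^sup>2 \<le> (kappa_v * a * na)\<^sup>2" using h by (intro power_mono) auto
    have "sb * nv\<^sup>2 / a \<le> sb * (kappa_v * a * na)\<^sup>2 / a"
      using h nv2 by (intro divide_right_mono mult_left_mono) auto
    also have "\<dots> = sb * kappa_v\<^sup>2 * a * (na * na)" using h by (simp add: power2_eq_square field_simps)
    also have "\<dots> \<le> sb * kappa_v\<^sup>2 * a * ((k_J * nc) * (k_J * k_c))"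
    proof -
      have "na \<le> k_J * k_c" using h p by (meson mult_left_mono less_imp_le order_trans)
      then have "na * na \<le> (k_J * nc) * (k_J * k_c)" using h by (intro mult_mono) auto
      then show ?thesis using h by (intro mult_left_mono) auto
    qed
    finally have e2: "sb * nv\<^sup>2 / a \<le> sb * kappa_v\<^sup>2 * a * ((k_J * nc) * (k_J * k_c))" .
    have "(k_f + k_r) * nv + sb * nv\<^sup>2 / a \<le> (k_f + k_r) * (kappa_v * a * (k_J * nc)) + sb * kappa_v\<^sup>2 * a * ((k_J * nc) * (k_J * k_c))"
      using e1 e2 by linarith
    also have "\<dots> = K * a * nc / 2" unfolding K_def sb_def by (simp add: power2_eq_square algebra_simps)
    finally show ?thesis using Db1[of k] unfolding nv_def sb_def a_def nc_def by linarith
  qed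
  have num0: "0 \<le> num k" for k
  proof (cases "Jtc k = 0")
    case True then show ?thesis using Rv0 unfolding num_def by simp
  next
    case False
    have hk: "0 < kappa_v * alpha k" using params apos[of k] by auto
    have "norm (c (x k) + J (x k) *v v k) \<le> norm (c (x k))"
      using Rv1[OF False] apply (elim conjE)
      apply (rule num_bound(1)[OF bnd(3)[of k] pos_bounds(3) hk Jtc_def[of k] False]) by assumption+
    then show ?thesis unfolding num_def by simp
  qed
  have Kpos: "0 < K" unfolding K_def using params pos_bounds by (auto intro!: mult_pos_pos add_pos_nonneg)
  have tmt_pos: "0 < tau_min_trial" unfolding tau_min_trial_def using params pos_bounds smin Kpos
    by (auto intro!: divide_pos_pos mult_pos_pos)
  have ttb: "tau_min_trial \<le> tt k" if D0: "0 < Dk k" for k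
  proof -
    have Jn: "Jtc k \<noteq> 0"
    proof
      assume "Jtc k = 0"
      then have "v k = 0" using Rv0 by blast
      then show False using Db1[of k] D0 by simp
    qed
    define a where "a = alpha k"
    define nc where "nc = norm (c (x k))"
    define na where "na = norm (Jtc k)"
    define bs where "bs = min (kappa_v * a) (1 / k_J\<^sup>2)"
    have ha: "0 < a" "a \<le> alpha0" using apos[of k] unfolding a_def by auto
    have nc0: "0 < nc" using Jn unfolding nc_def Jtc_def by auto
    have hk: "0 < kappa_v * alpha k" using params apos[of k] by auto
    have T1: "bs * na\<^sup>2 / (2 * nc) \<le> num k"
      unfolding num_def bs_def a_def nc_def na_def
      using Rv1[OF Jn] apply (elim conjE)
      apply (rule num_bound(2)[OF bnd(3)[of k] pos_bounds(3) hk Jtc_def[of k] Jn]) by assumption+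
    have T2: "smin * nc \<le> na" using smin_bound[of smin "J (x k)" "c (x k)"] smin unfolding na_def nc_def Jtc_def by auto
    have T2': "(smin * nc)\<^sup>2 \<le> na\<^sup>2" using T2 smin nc0 by (intro power_mono) auto
    have bs0: "0 \<le> bs" unfolding bs_def using ha params by auto
    have T3: "bs * smin\<^sup>2 * nc / 2 \<le> num k"
    proof -
      have "bs * smin\<^sup>2 * nc / 2 = bs * (smin * nc)\<^sup>2 / (2 * nc)" using nc0 by (simp add: power2_eq_square field_simps)
      also have "\<dots> \<le> bs * na\<^sup>2 / (2 * nc)" using T2' bs0 nc0 by (intro divide_right_mono mult_left_mono) auto
      finally show ?thesis using T1 by linarith
    qed
    have T4: "Dk k \<le> K * a * nc / 2" using Db2[of k] unfolding a_def nc_def .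
    have sc: "0 < 1 - sigma_c" using params by simp
    have "(1 - sigma_c) * (bs * smin\<^sup>2 * nc / 2) / (K * a * nc / 2) \<le> (1 - sigma_c) * num k / (K * a * nc / 2)"
      using T3 sc Kpos ha nc0 by (intro divide_right_mono mult_left_mono) auto
    also have "\<dots> \<le> (1 - sigma_c) * num k / Dk k"
      using T4 D0 sc num0[of k] by (intro divide_left_mono) auto
    finally have T5a: "(1 - sigma_c) * (bs * smin\<^sup>2 * nc / 2) / (K * a * nc / 2) \<le> tt k"
      unfolding tt_def .
    have "(1 - sigma_c) * (bs * smin\<^sup>2 * nc / 2) / (K * a * nc / 2) = (1 - sigma_c) * smin\<^sup>2 / K * (bs / a)"
      using Kpos ha nc0 by (simp add: field_simps)
    with T5a have T5: "(1 - sigma_c) * smin\<^sup>2 / K * (bs / a) \<le> tt k" by simp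
    have T6: "min kappa_v (1 / (k_J\<^sup>2 * alpha0)) \<le> bs / a"
    proof -
      have "bs / a = min kappa_v (1 / (k_J\<^sup>2 * a))" unfolding bs_def using ha
        by (simp add: min_divide_distrib_right field_simps)
      moreover have "1 / (k_J\<^sup>2 * alpha0) \<le> 1 / (k_J\<^sup>2 * a)" using ha pos_bounds
        by (intro divide_left_mono mult_left_mono mult_pos_pos) auto
      ultimately show ?thesis by auto
    qed
    have "tau_min_trial = (1 - sigma_c) * smin\<^sup>2 / K * min kappa_v (1 / (k_J\<^sup>2 * alpha0))"
    proof -
      define P where "P = (1 - sigma_c) * smin\<^sup>2 / K"
      have P0: "0 \<le> P" unfolding P_def using sc Kpos by auto
      have "P * min kappa_v (1 / (k_J\<^sup>2 * alpha0)) = min (P * kappa_v) (P * (1 / (k_J\<^sup>2 * alpha0)))"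
        using P0 by (metis min_mult_distrib_left)
      moreover have "P * kappa_v = (1 - sigma_c) * kappa_v * smin\<^sup>2 / K" unfolding P_def by simp
      moreover have "P * (1 / (k_J\<^sup>2 * alpha0)) = (1 - sigma_c) * (smin / k_J)\<^sup>2 / (K * alpha0)"
        unfolding P_def by (simp add: power_divide)
      ultimately show ?thesis unfolding tau_min_trial_def P_def by (simp add: mult_ac)
    qed
    also have "\<dots> \<le> (1 - sigma_c) * smin\<^sup>2 / K * (bs / a)"
      using T6 sc Kpos by (intro mult_left_mono) auto
    finally show ?thesis using T5 by linarith
  qed
  have tmt_ge: "tau_min \<le> (1 - eps_tau) * tau_min_trial" "(1 - eps_tau) * tau_min_trial \<le> tau_min_trial"
    unfolding tau_min_def using tmt_pos params by (auto simp: mult_le_cancel_right1)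
  have taub: "tau_min \<le> tau k" for k
  proof (induction k)
    case 0 then show ?case unfolding tau_min_def by simp
  next
    case (Suc k)
    have tpS: "tp (Suc k) = tau k" unfolding tp_def by simp
    show ?case
    proof (cases "Dk (Suc k) \<le> 0")
      case True then show ?thesis using Rt0[of "Suc k"] tpS Suc by simp
    next
      case False
      then have D0: "0 < Dk (Suc k)" by simp
      have tt1: "tau_min_trial \<le> tt (Suc k)" using ttb[OF D0] .
      show ?thesis
      proof (cases "tau k \<le> tt (Suc k)")
        case True then show ?thesis using Rt1[OF D0] tpS Suc by simp
      next
        case False
        have "(1 - eps_tau) * tau_min_trial \<le> (1 - eps_tau) * tau k"
          using False tt1 params by (intro mult_left_mono) auto
        then have "tau_min \<le> min ((1 - eps_tau) * tau k) (tt (Suc k))" using tmt_ge tt1 by auto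
        then show ?thesis using Rt1[OF D0] tpS False by simp
      qed
    qed
  qed
  have tau0: "0 < tau 0"
  proof -
    have tp0: "tp 0 = tau_m1" unfolding tp_def by simp
    show ?thesis
    proof (cases "Dk 0 \<le> 0")
      case True then show ?thesis using Rt0[of 0] tp0 params by simp
    next
      case False
      then have D0: "0 < Dk 0" by simp
      have "0 < tt 0" using ttb[OF D0] tmt_pos by linarith
      then show ?thesis using Rt1[OF D0] tp0 params by (auto simp: min_def)
    qed
  qed
  have tmin_pos: "0 < tau_min" unfolding tau_min_def using tau0 tmt_pos params by simp
  have tauD: "tau k * Dk k \<le> (1 - sigma_c) * num k" if D0: "0 < Dk k" for k
  proof -
    have "tau k \<le> tt k" using Rt1[OF D0] by (auto simp: min_def)
    then have "tau k * Dk k \<le> tt k * Dk k" using D0 by (intro mult_right_mono) auto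
    also have "\<dots> = (1 - sigma_c) * num k" unfolding tt_def using D0 by simp
    finally show ?thesis .
  qed
  have succ: "k \<in> S" if al: "alpha k * (tau k * L_g + L_J) \<le> tau k" for k
  proof -
    define xk where "xk = x k"
    define sk where "sk = v k + u k"
    define a where "a = alpha k"
    define t where "t = tau k"
    define n2 where "n2 = (norm sk)\<^sup>2"
    define sb where "sb = sigma_u + 1/2"
    define G where "G = g xk \<bullet> sk"
    define R0 where "R0 = r xk"
    define R1 where "R1 = r (xk + sk)"
    define C0 where "C0 = norm (c xk)"
    define CL where "CL = norm (c xk + J xk *v sk)"
    define C1 where "C1 = norm (c (xk + sk))"
    have ha: "0 < a" using apos[of k] unfolding a_def by simp
    have ht: "0 < t" using taub[of k] tmin_pos unfolding t_def by linarith
    have Js: "J xk *v sk = J xk *v v k" unfolding xk_def sk_def using Ru[of k]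
      by (simp add: matrix_vector_right_distrib)
    have numk: "num k = C0 - CL" unfolding num_def C0_def CL_def Js using xk_def by simp
    have F: "f (xk + sk) \<le> f xk + G + L_g / 2 * n2"
      unfolding G_def n2_def xk_def sk_def using XL
      by (intro taylor_f[OF f_C1(1) Xc xX(1) xX(2)]) auto
    have Cb: "norm (c (xk + sk) - c xk - J xk *v sk) \<le> L_J / 2 * n2"
      unfolding n2_def xk_def sk_def using XL
      by (intro taylor_c[OF c_C1(1) Xc xX(1) xX(2)]) auto
    have C: "C1 \<le> CL + L_J / 2 * n2"
    proof -
      have "c (xk + sk) = (c xk + J xk *v sk) + (c (xk + sk) - c xk - J xk *v sk)" by simp
      then have "C1 \<le> CL + norm (c (xk + sk) - c xk - J xk *v sk)" unfolding C1_def CL_def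
        by (metis norm_triangle_ineq)
      then show ?thesis using Cb by linarith
    qed
    have Dkk: "Dk k = G + sb * n2 / a + R1 - R0" unfolding Dk_def G_def sb_def n2_def a_def R1_def R0_def xk_def sk_def ..
    have q0: "0 \<le> t * n2 / a" using ht ha unfolding n2_def by simp
    have Ab: "t * (G + R1 - R0) - (C0 - CL) \<le> - sb * (t * n2 / a)"
    proof (cases "0 < Dk k")
      case True
      have "t * Dk k \<le> (1 - sigma_c) * (C0 - CL)" using tauD[OF True] numk unfolding t_def by simp
      moreover have "t * Dk k = t * (G + R1 - R0) + sb * (t * n2 / a)" unfolding Dkk by (simp add: algebra_simps)
      moreover have "(1 - sigma_c) * (C0 - CL) \<le> C0 - CL" using num0[of k] numk params
        by (simp add: algebra_simps)
      ultimately show ?thesis by linarith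
    next
      case False
      then have "t * Dk k \<le> 0" using ht by (simp add: mult_nonpos_nonneg mult_le_0_iff)
      moreover have "t * Dk k = t * (G + R1 - R0) + sb * (t * n2 / a)" unfolding Dkk by (simp add: algebra_simps)
      ultimately show ?thesis using num0[of k] numk by linarith
    qed
    have M: "(t * L_g + L_J) / 2 * n2 \<le> (t * n2 / a) / 2"
    proof -
      have "(t * L_g + L_J) \<le> t / a" using al ha unfolding a_def t_def by (simp add: field_simps mult.commute)
      then have "(t * L_g + L_J) * n2 \<le> t / a * n2" unfolding n2_def by (intro mult_right_mono) auto
      then show ?thesis by simp
    qed
    have Zq: "(1/2) * (t * n2 / a) \<le> sb * (t * n2 / a)" using q0 sb1 unfolding sb_def by (intro mult_right_mono) auto
    have eta: "0 < eta" "eta < 1" using params by auto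
    have key: "(1 - eta) * (t * (G + R1 - R0) - (C0 - CL)) \<le> (1 - eta) * (- sb * (t * n2 / a))"
      using Ab eta by (intro mult_left_mono) auto
    have "t * f (xk + sk) + t * R1 + C1 \<le> t * f xk + t * R0 + C0 - eta * (- (t * G + (t * n2 / a) / 2 + t * R1 - t * R0) + C0 - CL)"
    proof (rule succ_arith[OF _ C _ _ _ eta])
      show "t * f (xk + sk) \<le> t * f xk + t * G + t * (L_g / 2 * n2)" using F ht
        using mult_left_mono[OF F, of t] by (simp add: algebra_simps)
      show "t * (L_g / 2 * n2) + L_J / 2 * n2 \<le> t * n2 / a / 2" using M by (simp add: algebra_simps)
      show "t * n2 / a / 2 \<le> sb * (t * n2 / a)" using Zq by simp
      show "(1 - eta) * (t * G + t * R1 - t * R0 - (C0 - CL)) \<le> (1 - eta) * - (sb * (t * n2 / a))"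
        using key by (simp add: algebra_simps)
    qed
    moreover have "t * (n2 / (2 * a)) = (t * n2 / a) / 2" by simp
    ultimately have fin: "t * (f (xk + sk) + R1) + C1 \<le> t * (f xk + R0) + C0 - eta * (- t * (G + n2 / (2 * a) + R1 - R0) + C0 - CL)"
      by (simp add: algebra_simps)
    show ?thesis unfolding S_def mem_Collect_eq successful_def merit_def delta_q_def
      using fin unfolding xk_def sk_def a_def t_def n2_def G_def R0_def R1_def C0_def CL_def C1_def by simp
  qed
  define thr where "thr = tau_min / (tau_min * L_g + L_J)"
  have den: "0 < tau_min * L_g + L_J" using tmin_pos pos_bounds by (simp add: add_pos_pos)
  have thr_pos: "0 < thr" unfolding thr_def using tmin_pos den by simp
  have C1: "\<forall>k. alpha k \<le> thr \<longrightarrow> k \<in> S"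
  proof (intro allI impI)
    fix k assume ak: "alpha k \<le> thr"
    have tk: "tau_min \<le> tau k" "0 < tau k" using taub[of k] tmin_pos by auto
    have denk: "0 < tau k * L_g + L_J" using tk pos_bounds by (simp add: add_pos_pos)
    have "tau_min * L_J \<le> tau k * L_J" using tk pos_bounds by (intro mult_right_mono) auto
    then have "tau_min * (tau k * L_g + L_J) \<le> tau k * (tau_min * L_g + L_J)" by (simp add: algebra_simps)
    then have "thr \<le> tau k / (tau k * L_g + L_J)" unfolding thr_def using den denk
      by (simp add: divide_simps mult.commute)
    then have "alpha k \<le> tau k / (tau k * L_g + L_J)" using ak by linarith
    then have "alpha k * (tau k * L_g + L_J) \<le> tau k" using denk by (simp add: pos_le_divide_eq)
    then show "k \<in> S" by (rule succ)
  qed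
  have amin_eq: "alpha_min = min alpha0 (xi * thr)" unfolding alpha_min_def thr_def by simp
  have C3: "0 < alpha_min" unfolding amin_eq using params thr_pos by simp
  have C2: "\<forall>k. alpha_min \<le> alpha k"
  proof
    fix k show "alpha_min \<le> alpha k"
    proof (induction k)
      case 0 then show ?case unfolding amin_eq using A0 by simp
    next
      case (Suc k)
      show ?case
      proof (cases "k \<in> S")
        case True then show ?thesis using Rs[of k] Suc by simp
      next
        case False
        then have "thr < alpha k" using C1 by force
        then have "xi * thr \<le> xi * alpha k" using params by (intro mult_left_mono) auto
        then show ?thesis using Rf[OF False] unfolding amin_eq by simp
      qed
    qed
  qed
  define F where "F = {k. k \<notin> S}"
  have apow: "alpha k = alpha0 * xi ^ card (F \<inter> {..<k})" for k
  proof (induction k)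
    case 0 then show ?case using A0 by simp
  next
    case (Suc k)
    show ?case
    proof (cases "k \<in> S")
      case True
      then have "F \<inter> {..<Suc k} = F \<inter> {..<k}" unfolding F_def using less_Suc_eq by auto
      then show ?thesis using Rs[OF True] Suc by simp
    next
      case False
      then have e: "F \<inter> {..<Suc k} = insert k (F \<inter> {..<k})" unfolding F_def using less_Suc_eq by auto
      have "card (F \<inter> {..<Suc k}) = Suc (card (F \<inter> {..<k}))" unfolding e by simp
      then show ?thesis using Rf[OF False] Suc by simp
    qed
  qed
  define Lq where "Lq = ln (thr / alpha0) / ln xi"
  have Lq_eq: "Lq = ln (tau_min / (alpha0 * (tau_min * L_g + L_J))) / ln xi"
    unfolding Lq_def thr_def by (simp add: field_simps)
  have fb: "int (card (F \<inter> {..<k})) + 1 \<le> \<lceil>Lq\<rceil>" if kF: "k \<in> F" for k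
  proof -
    define j where "j = card (F \<inter> {..<k})"
    have "thr < alpha k" using C1 kF unfolding F_def by force
    then have "thr < alpha0 * xi ^ j" using apow[of k] unfolding j_def by simp
    then have "thr / alpha0 < xi ^ j" using params by (simp add: divide_simps mult.commute)
    then have "ln (thr / alpha0) < ln (xi ^ j)" using thr_pos params by (intro ln_less_cancel_iff[THEN iffD2]) auto
    also have "ln (xi ^ j) = real j * ln xi" using params by (simp add: ln_realpow)
    finally have h: "ln (thr / alpha0) < real j * ln xi" .
    have lx: "ln xi < 0" using params by simp
    have "real j < Lq" unfolding Lq_def using h lx by (simp add: less_divide_eq)
    then have "real j < real_of_int \<lceil>Lq\<rceil>" by (meson le_of_int_ceiling less_le_trans)
    then have "int j < \<lceil>Lq\<rceil>" by linarith
    then show ?thesis unfolding j_def by simp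
  qed
  define B where "B = max 0 \<lceil>Lq\<rceil>"
  have cb: "int (card (F \<inter> {..<n})) \<le> B" for n
  proof (cases "F \<inter> {..<n} = {}")
    case True then show ?thesis unfolding B_def by simp
  next
    case False
    define k where "k = Max (F \<inter> {..<n})"
    have fin: "finite (F \<inter> {..<n})" by simp
    have kin: "k \<in> F \<inter> {..<n}" unfolding k_def using Max_in[OF fin False] .
    have e: "F \<inter> {..<n} = insert k (F \<inter> {..<k})"
    proof
      show "F \<inter> {..<n} \<subseteq> insert k (F \<inter> {..<k})"
      proof
        fix y assume y: "y \<in> F \<inter> {..<n}"
        then have "y \<le> k" unfolding k_def using Max_ge[OF fin] by blast
        then show "y \<in> insert k (F \<inter> {..<k})" using y by auto
      qed
      show "insert k (F \<inter> {..<k}) \<subseteq> F \<inter> {..<n}" using kin by auto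
    qed
    have "card (F \<inter> {..<n}) = Suc (card (F \<inter> {..<k}))" unfolding e by simp
    then show ?thesis using fb[of k] kin unfolding B_def by simp
  qed
  have finF: "finite F"
  proof (rule ccontr)
    assume inf: "infinite F"
    obtain B' where B': "B' \<subseteq> F" "finite B'" "card B' = Suc (nat B)"
      using infinite_arbitrarily_large[OF inf] by blast
    have "B' \<noteq> {}" using B' by auto
    define n where "n = Suc (Max B')"
    have "B' \<subseteq> F \<inter> {..<n}" using B' Max_ge[OF B'(2)] unfolding n_def by (auto simp: less_Suc_eq_le)
    then have "card B' \<le> card (F \<inter> {..<n})" by (intro card_mono) auto
    then have "int (card B') \<le> B" using cb[of n] by linarith
    then show False using B'(3) unfolding B_def by simp
  qed
  have cardF: "int (card F) \<le> B"
  proof (cases "F = {}")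
    case True then show ?thesis unfolding B_def by simp
  next
    case False
    define n where "n = Suc (Max F)"
    have "F = F \<inter> {..<n}" using Max_ge[OF finF] unfolding n_def by (auto simp: less_Suc_eq_le)
    then show ?thesis using cb[of n] by simp
  qed
  show ?thesis
    using C1 C2 C3 finF cardF unfolding thr_def F_def B_def Lq_eq by blast
qed

end
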